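(* Let $(T_1,\dots,T_k)$ be a tuple of contractions on a Hilbert space $\mathcal{H}$ and $q_{ij}\in\mathbb{T}$ ($1\le i<j\le k$) such that $T_iT_j=q_{ij}T_jT_i$ and $T_iT_j^*=\overline{q_{ij}}\,T_j^*T_i$ for $1\le i<j\le k$. Then for every subset $u\subseteq\{1,\dots,k\}$, \[ S(u)=\sum_{v\subseteq u}(-1)^{|v|}(T^{e(v)})^*T^{e(v)}\ge 0, \] where for $v=\{n_1<\dots<n_r\}$, $T^{e(v)}=T_{n_1}\cdots T_{n_r}$ (and $T^{e(\emptyset)}=I$). *)

theory Defs
  imports "HOL-Analysis.Analysis"
begin

class complex_vector = real_vector +
  fixes scaleC :: "complex \<Rightarrow> 'a \<Rightarrow> 'a" (infixr \<open>*\<^sub>C\<close> 75)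
  assumes scaleC_add_right: "a *\<^sub>C (x + y) = a *\<^sub>C x + a *\<^sub>C y"
    and scaleC_add_left: "(a + b) *\<^sub>C x = a *\<^sub>C x + b *\<^sub>C x"
    and scaleC_scaleC: "a *\<^sub>C (b *\<^sub>C x) = (a * b) *\<^sub>C x"
    and scaleC_one: "1 *\<^sub>C x = x"
    and scaleR_scaleC: "r *\<^sub>R x = complex_of_real r *\<^sub>C x"

class complex_inner = complex_vector + real_normed_vector +
  fixes cinner :: "'a \<Rightarrow> 'a \<Rightarrow> complex"
  assumes cinner_commute: "cinner x y = cnj (cinner y x)"
    and cinner_add_left: "cinner (x + y) z = cinner x z + cinner y z"
    and cinner_scaleC_left: "cinner (a *\<^sub>C x) y = cnj a * cinner x y"
    and cinner_self_real: "Im (cinner x x) = 0"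
    and cinner_self_nonneg: "0 \<le> Re (cinner x x)"
    and cinner_self_eq_zero: "cinner x x = 0 \<longleftrightarrow> x = 0"
    and norm_eq_sqrt_cinner: "norm x = sqrt (Re (cinner x x))"

class chilbert_space = complex_inner + complete_space

definition clinear_op :: "('a::complex_vector \<Rightarrow> 'a) \<Rightarrow> bool" where
  "clinear_op T \<longleftrightarrow> (\<forall>x y. T (x + y) = T x + T y) \<and> (\<forall>c x. T (c *\<^sub>C x) = c *\<^sub>C T x)"

definition contraction :: "('a::complex_inner \<Rightarrow> 'a) \<Rightarrow> bool" where
  "contraction T \<longleftrightarrow> clinear_op T \<and> (\<forall>x. norm (T x) \<le> norm x)"

text \<open>Hilbert space adjoint (unique for bounded operators on a Hilbert space).\<close>
definition adj :: "('a::complex_inner \<Rightarrow> 'a) \<Rightarrow> ('a \<Rightarrow> 'a)" where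
  "adj T = (SOME S. \<forall>x y. cinner (T x) y = cinner x (S y))"

definition positive_op :: "('a::complex_inner \<Rightarrow> 'a) \<Rightarrow> bool" where
  "positive_op A \<longleftrightarrow> (\<forall>x. Im (cinner x (A x)) = 0 \<and> 0 \<le> Re (cinner x (A x)))"

definition Tpow :: "(nat \<Rightarrow> 'a \<Rightarrow> 'a) \<Rightarrow> nat set \<Rightarrow> ('a \<Rightarrow> 'a)" where
  "Tpow T v = foldr (\<lambda>i f. T i \<circ> f) (sorted_list_of_set v) id"

definition Sop :: "(nat \<Rightarrow> 'a::complex_inner \<Rightarrow> 'a) \<Rightarrow> nat set \<Rightarrow> ('a \<Rightarrow> 'a)" where
  "Sop T u = (\<lambda>x. \<Sum>v\<in>Pow u. ((-1::real) ^ card v) *\<^sub>R adj (Tpow T v) (Tpow T v x))"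

end

theory Submission
  imports Defs
begin


lemma quad_lemma:
  fixes a b c :: real
  assumes "\<And>t. 0 \<le> a - 2 * t * b + t^2 * c"
  shows "b^2 \<le> a * c"
proof (cases "c = 0")
  case True
  show ?thesis
  proof (cases "b = 0")
    case True then show ?thesis using \<open>c = 0\<close> by simp
  next
    case False
    have "0 \<le> a - 2 * ((a + 1) / (2 * b)) * b" using assms[of "(a+1)/(2*b)"] True by simp
    also have "\<dots> = -1" using False by (simp add: field_simps)
    finally show ?thesis by simp
  qed
next
  case False
  have c0: "0 \<le> c"
  proof (rule ccontr)
    assume "\<not> 0 \<le> c"
    then have cn: "c < 0" by simp
    define t where "t = (\<bar>a\<bar> + 2*\<bar>b\<bar> + 1) / (- c) + 1"
    have t1: "t \<ge> 1" unfolding t_def using cn by (simp add: field_simps)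
    have "t * (-c) \<ge> \<bar>a\<bar> + 2*\<bar>b\<bar> + 1" unfolding t_def using cn by (simp add: field_simps)
    then have "t * (t * (-c)) \<ge> t * (\<bar>a\<bar> + 2*\<bar>b\<bar> + 1)"
      using t1 by (intro mult_left_mono) auto
    then have "t^2 * (-c) \<ge> t * (\<bar>a\<bar> + 2*\<bar>b\<bar> + 1)"
      by (simp add: power2_eq_square mult.assoc)
    moreover have "t * (\<bar>a\<bar> + 2*\<bar>b\<bar> + 1) \<ge> \<bar>a\<bar> + 2 * t * \<bar>b\<bar> + 1"
    proof -
      have "1 * \<bar>a\<bar> \<le> t * \<bar>a\<bar>" using t1 by (intro mult_right_mono) auto
      then show ?thesis using t1 by (simp add: algebra_simps)
    qed
    moreover have "a - 2 * t * b \<le> \<bar>a\<bar> + 2 * t * \<bar>b\<bar>"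
    proof -
      have "t * (- b) \<le> t * \<bar>b\<bar>" using t1 by (intro mult_left_mono) auto
      then show ?thesis by (simp add: algebra_simps)
    qed
    ultimately show False using assms[of t] by linarith
  qed
  with False have cp: "c > 0" by simp
  have "0 \<le> a - 2 * (b/c) * b + (b/c)^2 * c" by (rule assms)
  also have "\<dots> = a - b^2 / c" using cp by (simp add: field_simps power2_eq_square)
  finally have "b^2 / c \<le> a" by simp
  then show ?thesis using cp by (simp add: field_simps)
qed

context complex_inner begin

lemma cinner_add_right: "cinner x (y + z) = cinner x y + cinner x z"
  using cinner_commute[of x "y+z"] cinner_commute[of x y] cinner_commute[of x z]
  by (simp add: cinner_add_left)

lemma cinner_scaleC_right: "cinner x (c *\<^sub>C y) = c * cinner x y"
  using cinner_commute[of x "c *\<^sub>C y"] cinner_commute[of x y]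
  by (simp add: cinner_scaleC_left)

lemma cinner_scaleR_left: "cinner (r *\<^sub>R x) y = complex_of_real r * cinner x y"
  by (simp add: scaleR_scaleC cinner_scaleC_left)

lemma cinner_scaleR_right: "cinner x (r *\<^sub>R y) = complex_of_real r * cinner x y"
  by (simp add: scaleR_scaleC cinner_scaleC_right)

lemma cinner_zero_left [simp]: "cinner 0 y = 0"
  using cinner_add_left[of 0 0 y] by simp

lemma cinner_zero_right [simp]: "cinner x 0 = 0"
  using cinner_add_right[of x 0 0] by simp

lemma cinner_minus_left: "cinner (- x) y = - cinner x y"
proof -
  have h: "cinner x y + cinner (-x) y = 0" using cinner_add_left[of x "-x" y] by simp
  have "cinner (-x) y = (cinner x y + cinner (-x) y) - cinner x y" by simp
  also have "\<dots> = - cinner x y" by (simp only: h) simp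
  finally show ?thesis .
qed

lemma cinner_minus_right: "cinner x (- y) = - cinner x y"
proof -
  have h: "cinner x y + cinner x (-y) = 0" using cinner_add_right[of x y "-y"] by simp
  have "cinner x (-y) = (cinner x y + cinner x (-y)) - cinner x y" by simp
  also have "\<dots> = - cinner x y" by (simp only: h) simp
  finally show ?thesis .
qed

lemma cinner_diff_left: "cinner (x - y) z = cinner x z - cinner y z"
  by (simp only: diff_conv_add_uminus[of x y] cinner_add_left cinner_minus_left) simp

lemma cinner_diff_right: "cinner x (y - z) = cinner x y - cinner x z"
  by (simp only: diff_conv_add_uminus[of y z] cinner_add_right cinner_minus_right) simp

lemma Re_cinner_self: "Re (cinner x x) = (norm x)^2"
  using norm_eq_sqrt_cinner[of x] cinner_self_nonneg[of x] by simp

lemma cinner_self: "cinner x x = complex_of_real ((norm x)^2)"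
  using Re_cinner_self[of x] cinner_self_real[of x] by (simp add: complex_eq_iff)

lemma Re_cinner_sym: "Re (cinner x y) = Re (cinner y x)"
  by (subst cinner_commute) simp

lemma cinner_sum_right: "cinner x (sum f A) = (\<Sum>a\<in>A. cinner x (f a))"
  by (induction A rule: infinite_finite_induct) (simp_all add: cinner_add_right)

lemma Re_expand: "Re (cinner (a - t *\<^sub>R b) (a - t *\<^sub>R b))
   = Re (cinner a a) - 2 * t * Re (cinner a b) + t^2 * Re (cinner b b)"
  using Re_cinner_sym[of a b]
  by (simp add: cinner_diff_left cinner_diff_right cinner_scaleR_left cinner_scaleR_right
      power2_eq_square algebra_simps)

lemma real_CS: "(Re (cinner x y))^2 \<le> (norm x)^2 * (norm y)^2"
proof -
  have "0 \<le> (norm x)^2 - 2 * t * Re (cinner x y) + t^2 * (norm y)^2" for t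
  proof -
    have "0 \<le> Re (cinner (x - t *\<^sub>R y) (x - t *\<^sub>R y))" by (rule cinner_self_nonneg)
    also have "\<dots> = Re (cinner x x) - 2 * t * Re (cinner x y) + t^2 * Re (cinner y y)" by (rule Re_expand)
    finally show ?thesis by (simp add: Re_cinner_self)
  qed
  from quad_lemma[OF this] show ?thesis .
qed

lemma Re_CS: "Re (cinner x y) \<le> norm x * norm y"
proof -
  have "(Re (cinner x y))^2 \<le> (norm x * norm y)^2"
    using real_CS[of x y] by (simp add: power_mult_distrib)
  then have "\<bar>Re (cinner x y)\<bar> \<le> \<bar>norm x * norm y\<bar>"
    using abs_le_square_iff by blast
  then show ?thesis by simp
qed

lemma norm_scaleC: "norm (c *\<^sub>C x) = cmod c * norm x"
proof -
  have "cinner (c *\<^sub>C x) (c *\<^sub>C x) = (c * cnj c) * cinner x x"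
    by (simp add: cinner_scaleC_left cinner_scaleC_right mult_ac)
  then have "(norm (c *\<^sub>C x))^2 = Re ((c * cnj c) * cinner x x)"
    by (simp only: Re_cinner_self[symmetric])
  also have "\<dots> = Re (complex_of_real ((cmod c)^2 * (norm x)^2))"
    by (simp only: cinner_self complex_norm_square[symmetric] of_real_mult)
  also have "\<dots> = (cmod c * norm x)^2"
    by (simp add: power_mult_distrib)
  finally show ?thesis by (simp add: power2_eq_iff_nonneg)
qed

lemma CS: "cmod (cinner x y) \<le> norm x * norm y"
proof (cases "cinner x y = 0")
  case True then show ?thesis by simp
next
  case False
  define c where "c = cnj (cinner x y) / cmod (cinner x y)"
  have "cinner x (c *\<^sub>C y) = (cinner x y * cnj (cinner x y)) / complex_of_real (cmod (cinner x y))"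
    by (simp add: c_def cinner_scaleC_right mult.commute)
  also have "\<dots> = complex_of_real ((cmod (cinner x y))^2) / complex_of_real (cmod (cinner x y))"
    by (simp only: complex_norm_square)
  also have "\<dots> = complex_of_real (cmod (cinner x y))"
    using False by (simp add: power2_eq_square del: of_real_power)
  finally have "cinner x (c *\<^sub>C y) = complex_of_real (cmod (cinner x y))" .
  moreover have "cmod c = 1" using False by (simp add: c_def norm_divide)
  ultimately show ?thesis using Re_CS[of x "c *\<^sub>C y"] by (simp add: norm_scaleC)
qed

lemma cinner_ext: "(\<And>z. cinner z a = cinner z b) \<Longrightarrow> a = b"
proof -
  assume h: "\<And>z. cinner z a = cinner z b"
  have "cinner (a - b) (a - b) = 0" by (simp add: cinner_diff_right h)
  then show "a = b" by (simp add: cinner_self_eq_zero)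
qed

end



lemma parallelogram:
  fixes a b :: "'a::complex_inner"
  shows "(norm (a - b))^2 + (norm (a + b))^2 = 2 * (norm a)^2 + 2 * (norm b)^2"
  by (simp add: Re_cinner_self[symmetric] cinner_diff_left cinner_diff_right
      cinner_add_left cinner_add_right)

lemma riesz:
  fixes f :: "'a::chilbert_space \<Rightarrow> complex"
  assumes add: "\<And>x y. f (x + y) = f x + f y"
    and sc: "\<And>c x. f (c *\<^sub>C x) = c * f x"
    and bd: "\<And>x. cmod (f x) \<le> C * norm x"
  shows "\<exists>z. \<forall>x. f x = cinner z x"
proof (cases "\<forall>x. f x = 0")
  case True then show ?thesis by (intro exI[of _ 0]) simp
next
  case False
  then obtain x1 where x1: "f x1 \<noteq> 0" by auto
  have scR: "f (r *\<^sub>R x) = complex_of_real r * f x" for r x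
    by (simp add: scaleR_scaleC sc)
  have f0: "f 0 = 0" using add[of 0 0] by simp
  have fdiff: "f (x - y) = f x - f y" for x y
  proof -
    have "f (x - y) + f y = f x" using add[of "x - y" y] by simp
    then show ?thesis by (simp add: algebra_simps)
  qed
  define A where "A = {x. f x = 1}"
  have eA: "(1 / f x1) *\<^sub>C x1 \<in> A" using x1 by (simp add: A_def sc)
  define d where "d = Inf (norm ` A)"
  have bdd: "bdd_below (norm ` A)" by (rule bdd_belowI[of _ 0]) auto
  have dlow: "d \<le> norm y" if "y \<in> A" for y
    unfolding d_def using bdd that by (simp add: cInf_lower)
  have d0: "0 \<le> d" unfolding d_def using eA by (intro cInf_greatest) auto
  have "\<exists>x\<in>A. (norm x)^2 < d^2 + 1 / real (Suc n)" for n
  proof -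
    have "d < sqrt (d^2 + 1 / real (Suc n))"
      by (intro real_less_rsqrt) simp
    then obtain x where xA: "x \<in> A" and xl: "norm x < sqrt (d^2 + 1 / real (Suc n))"
      using cInf_lessD[of "norm ` A"] eA unfolding d_def by blast
    have "(norm x)^2 < (sqrt (d^2 + 1 / real (Suc n)))^2"
      using xl by (intro power_strict_mono) auto
    also have "\<dots> = d^2 + 1 / real (Suc n)" by simp
    finally show ?thesis using xA by blast
  qed
  then obtain X where XA: "\<And>n. X n \<in> A" and Xn: "\<And>n. (norm (X n))^2 < d^2 + 1 / real (Suc n)"
    by (metis (no_types))
  have mid: "(1/2::real) *\<^sub>R (a + b) \<in> A" if "a \<in> A" "b \<in> A" for a b
    using that by (simp add: A_def scR add)
  have pd: "(norm (X m - X n))^2 \<le> 2 / real (Suc m) + 2 / real (Suc n)" for m n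
  proof -
    have "d \<le> norm ((1/2::real) *\<^sub>R (X m + X n))" using dlow mid XA by blast
    then have "2 * d \<le> norm (X m + X n)" by simp
    then have "(2 * d)^2 \<le> (norm (X m + X n))^2" using d0 by (intro power_mono) auto
    then show ?thesis using parallelogram[of "X m" "X n"] Xn[of m] Xn[of n] by (simp add: power_mult_distrib)
  qed
  have "Cauchy X"
  proof (rule metric_CauchyI)
    fix e :: real assume e: "0 < e"
    obtain M :: nat where M: "4 / e^2 < real M" using reals_Archimedean2 by blast
    have "\<forall>m\<ge>M. \<forall>n\<ge>M. dist (X m) (X n) < e"
    proof (intro allI impI)
      fix m n assume mn: "M \<le> m" "M \<le> n"
      have "2 / real (Suc m) \<le> 2 / real (Suc M)" "2 / real (Suc n) \<le> 2 / real (Suc M)"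
        using mn by (simp_all add: frac_le)
      moreover have "4 / real (Suc M) < e^2"
      proof -
        have e2: "0 < e^2" using e by simp
        have "4 < real M * e^2" using M e2 by (simp add: pos_divide_less_eq)
        moreover have "real (Suc M) * e^2 = real M * e^2 + e^2" by (simp add: distrib_right)
        ultimately have "4 < real (Suc M) * e^2" using e2 by linarith
        then show ?thesis by (simp add: pos_divide_less_eq mult.commute)
      qed
      ultimately have "(norm (X m - X n))^2 < e^2" using pd[of m n] by linarith
      then show "dist (X m) (X n) < e" using e by (simp add: dist_norm power_less_imp_less_base)
    qed
    then show "\<exists>M. \<forall>m\<ge>M. \<forall>n\<ge>M. dist (X m) (X n) < e" by blast
  qed
  then obtain x0 where lim: "X \<longlonglongrightarrow> x0" using Cauchy_convergent_iff convergent_def by blast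
  have blf: "bounded_linear f"
  proof (rule bounded_linear_intro[where K = C])
    show "f (x + y) = f x + f y" for x y by (rule add)
    show "f (r *\<^sub>R x) = r *\<^sub>R f x" for r x by (simp add: scR scaleR_conv_of_real)
    show "norm (f x) \<le> norm x * C" for x using bd[of x] by (simp add: mult.commute)
  qed
  have "(\<lambda>n. f (X n)) \<longlonglongrightarrow> f x0" using bounded_linear.tendsto[OF blf lim] .
  moreover have "(\<lambda>n. f (X n)) = (\<lambda>n. 1)" using XA by (auto simp: A_def)
  ultimately have fx0: "f x0 = 1" using LIMSEQ_unique tendsto_const by metis
  have "(norm x0)^2 \<le> d^2"
  proof (rule LIMSEQ_le)
    show "(\<lambda>n. (norm (X n))^2) \<longlonglongrightarrow> (norm x0)^2" by (intro tendsto_intros lim)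
    show "(\<lambda>n. d^2 + 1 / real (Suc n)) \<longlonglongrightarrow> d^2"
      using tendsto_add[OF tendsto_const[of "d^2"] LIMSEQ_inverse_real_of_nat]
      by (simp add: inverse_eq_divide)
    show "\<exists>N. \<forall>n\<ge>N. (norm (X n))^2 \<le> d^2 + 1 / real (Suc n)" using Xn less_imp_le by blast
  qed
  then have nx0: "norm x0 \<le> d" using d0 by (simp add: power2_le_iff_abs_le)
  have minim: "norm x0 \<le> norm y" if "y \<in> A" for y using dlow[OF that] nx0 by simp
  have orthR: "Re (cinner x0 w) = 0" if "f w = 0" for w
  proof -
    have "\<And>t. 0 \<le> 0 - 2 * t * Re (cinner x0 w) + t^2 * Re (cinner w w)"
    proof -
      fix t :: real
      have "x0 - t *\<^sub>R w \<in> A" using fx0 that by (simp add: A_def fdiff scR)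
      then have sq: "(norm x0)^2 \<le> (norm (x0 - t *\<^sub>R w))^2" using minim by (intro power_mono) auto
      have ex: "(norm (x0 - t *\<^sub>R w))^2 = (norm x0)^2 - 2 * t * Re (cinner x0 w) + t^2 * Re (cinner w w)"
        using Re_expand[of x0 t w] by (simp only: Re_cinner_self)
      show "0 \<le> 0 - 2 * t * Re (cinner x0 w) + t^2 * Re (cinner w w)"
        using sq ex by linarith
    qed
    from quad_lemma[OF this] show ?thesis by simp
  qed
  have orth: "cinner x0 w = 0" if "f w = 0" for w
  proof -
    have "f (\<i> *\<^sub>C w) = 0" using that by (simp add: sc)
    then have "Re (cinner x0 (\<i> *\<^sub>C w)) = 0" by (rule orthR)
    then have "Im (cinner x0 w) = 0" by (simp add: cinner_scaleC_right)
    then show ?thesis using orthR[OF that] by (simp add: complex_eq_iff)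
  qed
  have x0nz: "x0 \<noteq> 0" using fx0 f0 by auto
  then have n0: "norm x0 \<noteq> 0" by simp
  show ?thesis
  proof (intro exI[of _ "(1 / (norm x0)^2) *\<^sub>R x0"] allI)
    fix x
    have "f (x - f x *\<^sub>C x0) = 0" by (simp add: fdiff sc fx0)
    then have "cinner x0 (x - f x *\<^sub>C x0) = 0" by (rule orth)
    then have "cinner x0 x = f x * complex_of_real ((norm x0)^2)"
      by (simp add: cinner_diff_right cinner_scaleC_right cinner_self)
    then show "f x = cinner ((1 / (norm x0)^2) *\<^sub>R x0) x"
      using n0 by (simp add: cinner_scaleR_left field_simps del: of_real_power)
  qed
qed

lemma adj_exists:
  fixes T :: "'a::chilbert_space \<Rightarrow> 'a"
  assumes "contraction T"
  shows "\<exists>S. \<forall>x y. cinner (T x) y = cinner x (S y)"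
proof -
  have lin: "clinear_op T" and nb: "\<And>x. norm (T x) \<le> norm x"
    using assms by (auto simp: contraction_def)
  have "\<forall>y. \<exists>z. \<forall>x. cinner y (T x) = cinner z x"
  proof
    fix y
    show "\<exists>z. \<forall>x. cinner y (T x) = cinner z x"
    proof (rule riesz[where C = "norm y"])
      show "cinner y (T (a + b)) = cinner y (T a) + cinner y (T b)" for a b
        using lin by (simp add: clinear_op_def cinner_add_right)
      show "cinner y (T (c *\<^sub>C a)) = c * cinner y (T a)" for c a
        using lin by (simp add: clinear_op_def cinner_scaleC_right)
      show "cmod (cinner y (T a)) \<le> norm y * norm a" for a
        using CS[of y "T a"] nb[of a] by (meson mult_left_mono norm_ge_zero order_trans)
    qed
  qed
  then obtain S where S: "\<And>y x. cinner y (T x) = cinner (S y) x" by metis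
  have "cinner (T x) y = cinner x (S y)" for x y
    by (metis S cinner_commute)
  then show ?thesis by blast
qed

lemma adj_prop:
  fixes T :: "'a::chilbert_space \<Rightarrow> 'a"
  assumes "contraction T"
  shows "cinner (T x) y = cinner x (adj T y)"
proof -
  from someI_ex[OF adj_exists[OF assms]] show ?thesis unfolding adj_def by blast
qed

lemma adj_prop2:
  fixes T :: "'a::chilbert_space \<Rightarrow> 'a"
  assumes "contraction T"
  shows "cinner (adj T y) x = cinner y (T x)"
  by (metis adj_prop[OF assms] cinner_commute)

lemma adj_scaleC:
  fixes T :: "'a::chilbert_space \<Rightarrow> 'a"
  assumes "contraction T"
  shows "adj T (c *\<^sub>C y) = c *\<^sub>C adj T y"
proof (rule cinner_ext)
  fix z
  have lin: "clinear_op T" using assms by (simp add: contraction_def)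
  show "cinner z (adj T (c *\<^sub>C y)) = cinner z (c *\<^sub>C adj T y)"
    by (simp add: adj_prop[OF assms, symmetric] cinner_scaleC_right)
qed

lemma adj_norm:
  fixes T :: "'a::chilbert_space \<Rightarrow> 'a"
  assumes "contraction T"
  shows "norm (adj T y) \<le> norm y"
proof -
  have nb: "\<And>x. norm (T x) \<le> norm x" using assms by (simp add: contraction_def)
  have "(norm (adj T y))^2 = Re (cinner (T (adj T y)) y)"
    by (simp add: adj_prop[OF assms] Re_cinner_self)
  also have "\<dots> \<le> norm (T (adj T y)) * norm y" by (rule Re_CS)
  also have "\<dots> \<le> norm (adj T y) * norm y" by (intro mult_right_mono nb) auto
  finally have "norm (adj T y) * norm (adj T y) \<le> norm (adj T y) * norm y"
    by (simp add: power2_eq_square)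
  then show ?thesis
    by (metis mult_le_cancel_left_pos norm_ge_zero order_le_less)
qed



lemma clinear_diff_scaleR:
  assumes "clinear_op T"
  shows "T (y - t *\<^sub>R z) = T y - t *\<^sub>R T z"
proof -
  have add: "T (a + b) = T a + T b" and sc: "T (c *\<^sub>C a) = c *\<^sub>C T a" for a b c
    using assms by (auto simp: clinear_op_def)
  have scR: "T (r *\<^sub>R a) = r *\<^sub>R T a" for r a by (simp add: scaleR_scaleC sc)
  have "T (y - t *\<^sub>R z) = T (y + (- t) *\<^sub>R z)" by simp
  also have "\<dots> = T y - t *\<^sub>R T z" by (simp only: add scR) simp
  finally show ?thesis .
qed

lemma contraction_id: "contraction id"
  by (simp add: contraction_def clinear_op_def)

lemma contraction_comp:
  assumes "contraction S" "contraction T"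
  shows "contraction (S \<circ> T)"
  using assms unfolding contraction_def clinear_op_def by (auto intro: order_trans)

lemma foldr_contraction:
  "(\<And>i. i \<in> set xs \<Longrightarrow> contraction (T i)) \<Longrightarrow> contraction (foldr (\<lambda>i f. T i \<circ> f) xs id)"
  by (induction xs) (auto simp: contraction_id contraction_comp)

lemma Tpow_contraction:
  assumes "finite v" "\<And>i. i \<in> v \<Longrightarrow> contraction (T i)"
  shows "contraction (Tpow T v)"
  unfolding Tpow_def using assms by (intro foldr_contraction) auto

lemma foldr_commute:
  "(\<And>i y. i \<in> set xs \<Longrightarrow> P (T i y) = T i (P y)) \<Longrightarrow>
    P (foldr (\<lambda>i f. T i \<circ> f) xs id y) = foldr (\<lambda>i f. T i \<circ> f) xs id (P y)"
  by (induction xs arbitrary: y) auto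

lemma Tpow_commute:
  assumes "finite v" "\<And>i y. i \<in> v \<Longrightarrow> P (T i y) = T i (P y)"
  shows "P (Tpow T v y) = Tpow T v (P y)"
  unfolding Tpow_def using assms by (intro foldr_commute) auto

lemma Tpow_empty: "Tpow T {} = id"
  by (simp add: Tpow_def)

lemma Tpow_insert_min:
  assumes "finite v" "\<And>j. j \<in> v \<Longrightarrow> n < j"
  shows "Tpow T (insert n v) = T n \<circ> Tpow T v"
proof -
  have nv: "n \<notin> v" using assms(2) by blast
  have "Min (insert n v) = n"
  proof (rule Min_eqI)
    show "finite (insert n v)" using assms(1) by simp
    show "n \<le> y" if "y \<in> insert n v" for y using that assms(2) by (auto intro: less_imp_le)
  qed simp
  then have "sorted_list_of_set (insert n v) = n # sorted_list_of_set v"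
    using sorted_list_of_set_nonempty[of "insert n v"] assms(1) nv by simp
  then show ?thesis by (simp add: Tpow_def)
qed

lemma mono_lemma:
  fixes B :: "'a \<Rightarrow> 'a \<Rightarrow> real" and P :: "'a \<Rightarrow> 'a"
  assumes psd: "\<And>y. 0 \<le> B y y"
    and cs: "\<And>y z. (B y z)^2 \<le> B y y * B z z"
    and sa: "\<And>a b. B (P a) b = B a (P b)"
    and bnd: "\<And>j. B ((P^^j) x) ((P^^j) x) \<le> K"
  shows "B (P x) x \<le> B x x"
proof (rule ccontr)
  define G where "G = B x x"
  define a where "a = B (P x) x"
  assume "\<not> B (P x) x \<le> B x x"
  then have aG: "G < a" by (simp add: G_def a_def)
  have G0: "0 \<le> G" using psd by (simp add: G_def)
  have a0: "0 < a" using aG G0 by simp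
  have saj: "B ((P^^j) p) r = B p ((P^^j) r)" for j p r
  proof (induction j arbitrary: p r)
    case 0 then show ?case by simp
  next
    case (Suc j)
    have "B ((P^^Suc j) p) r = B (P ((P^^j) p)) r" by simp
    also have "\<dots> = B ((P^^j) p) (P r)" by (rule sa)
    also have "\<dots> = B p ((P^^j) (P r))" by (rule Suc)
    also have "\<dots> = B p ((P^^Suc j) r)" by (simp add: funpow_swap1)
    finally show ?case .
  qed
  have Gpos: "0 < G"
  proof (rule ccontr)
    assume "\<not> 0 < G"
    then have "G = 0" using G0 by simp
    then have "a^2 \<le> 0" using cs[of "P x" x] by (simp add: a_def G_def)
    then show False using a0 by simp
  qed
  define c where "c m = B ((P^^(2^m)) x) x" for m
  have K0: "G \<le> K" using bnd[of 0] by (simp add: G_def)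
  have cbound: "c m \<le> (K + G) / 2" for m
  proof -
    define Q where "Q = (P^^(2^m)) x"
    have "(c m)^2 \<le> B Q Q * G" using cs[of Q x] by (simp add: c_def Q_def G_def)
    moreover have "B Q Q \<le> K" "0 \<le> B Q Q" using bnd psd by (auto simp: Q_def)
    ultimately have "(c m)^2 \<le> K * G"
      using G0 by (meson mult_right_mono order_trans)
    also have "\<dots> \<le> ((K + G)/2)^2"
    proof -
      have "0 \<le> ((K - G)/2)^2" by simp
      then show ?thesis by (simp add: power2_eq_square field_simps)
    qed
    finally have "\<bar>c m\<bar> \<le> \<bar>(K + G)/2\<bar>" using abs_le_square_iff by blast
    then show ?thesis using K0 G0 by simp
  qed
  have key: "a^(2^m) * G \<le> c m * G^(2^m)" for m
  proof (induction m)
    case 0 then show ?case by (simp add: a_def c_def)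
  next
    case (Suc m)
    define Q where "Q = (P^^(2^m)) x"
    have QQ: "B Q Q = c (Suc m)"
    proof -
      have "B Q Q = B ((P^^(2^m)) Q) x" using saj[of "2^m" Q x] by (simp add: Q_def)
      also have "\<dots> = c (Suc m)" by (simp add: Q_def c_def funpow_add mult_2)
      finally show ?thesis .
    qed
    have cm: "(c m)^2 \<le> c (Suc m) * G" using cs[of Q x] QQ by (simp add: c_def Q_def G_def)
    have pa: "b^(2^Suc m) = (b^(2^m))^2" for b :: real
      by (simp add: power_mult[symmetric] mult.commute)
    have "a^(2^Suc m) * G * G = (a^(2^m) * G)^2"
      by (simp only: pa) (simp add: power_mult_distrib power2_eq_square mult_ac)
    also have "\<dots> \<le> (c m * G^(2^m))^2"
      using Suc a0 G0 by (intro power_mono) auto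
    also have "\<dots> = (c m)^2 * G^(2^Suc m)" by (simp only: pa[of G]) (simp add: power_mult_distrib)
    also have "\<dots> \<le> c (Suc m) * G * G^(2^Suc m)" using cm G0 by (intro mult_right_mono) auto
    finally have "a^(2^Suc m) * G * G \<le> c (Suc m) * G^(2^Suc m) * G"
      by (simp add: mult_ac)
    then show ?case using Gpos by simp
  qed
  have pw: "(a / G)^(2^m) \<le> (K + G) / (2 * G)" for m
  proof -
    have "a^(2^m) * G \<le> (K + G) / 2 * G^(2^m)"
      using key[of m] cbound[of m] G0 by (meson mult_right_mono order_trans zero_le_power)
    then show ?thesis using Gpos by (simp add: field_simps power_divide)
  qed
  have "1 < a / G" using aG Gpos by simp
  from real_arch_pow[OF this] obtain n where n: "(K + G) / (2 * G) < (a / G)^n" by blast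
  have "(a / G)^n \<le> (a / G)^(2^n)"
    using \<open>1 < a / G\<close> by (intro power_increasing) (auto intro: less_imp_le less_exp)
  then show False using n pw[of n] by simp
qed

definition Bf :: "(nat \<Rightarrow> 'a::complex_inner \<Rightarrow> 'a) \<Rightarrow> nat set \<Rightarrow> 'a \<Rightarrow> 'a \<Rightarrow> real" where
  "Bf T u y z = (\<Sum>v\<in>Pow u. (-1)^card v * Re (cinner (Tpow T v y) (Tpow T v z)))"

lemma Bf_expand:
  assumes "\<And>v. v \<in> Pow u \<Longrightarrow> contraction (Tpow T v)"
  shows "Bf T u (y - t *\<^sub>R z) (y - t *\<^sub>R z) = Bf T u y y - 2 * t * Bf T u y z + t^2 * Bf T u z z"
proof -
  have "Bf T u (y - t *\<^sub>R z) (y - t *\<^sub>R z) = (\<Sum>v\<in>Pow u. (-1)^card v *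
     (Re (cinner (Tpow T v y) (Tpow T v y)) - 2 * t * Re (cinner (Tpow T v y) (Tpow T v z))
      + t^2 * Re (cinner (Tpow T v z) (Tpow T v z))))"
    unfolding Bf_def
  proof (rule sum.cong)
    fix v assume "v \<in> Pow u"
    then have "clinear_op (Tpow T v)" using assms by (simp add: contraction_def)
    then show "(-1)^card v * Re (cinner (Tpow T v (y - t *\<^sub>R z)) (Tpow T v (y - t *\<^sub>R z))) =
      (-1)^card v * (Re (cinner (Tpow T v y) (Tpow T v y)) - 2 * t * Re (cinner (Tpow T v y) (Tpow T v z))
      + t^2 * Re (cinner (Tpow T v z) (Tpow T v z)))"
      by (simp add: clinear_diff_scaleR Re_expand)
  qed simp
  also have "\<dots> = Bf T u y y - 2 * t * Bf T u y z + t^2 * Bf T u z z"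
    unfolding Bf_def
    by (simp add: algebra_simps sum.distrib sum_subtractf sum_distrib_left)
  finally show ?thesis .
qed



lemma main_lemma:
  fixes T :: "nat \<Rightarrow> 'a::chilbert_space \<Rightarrow> 'a"
    and q :: "nat \<Rightarrow> nat \<Rightarrow> complex"
    and k :: nat
  assumes contr: "\<And>i. i \<in> {1..k} \<Longrightarrow> contraction (T i)"
    and comm: "\<And>i j. 1 \<le> i \<Longrightarrow> i < j \<Longrightarrow> j \<le> k \<Longrightarrow>
                 T i \<circ> T j = (\<lambda>x. q i j *\<^sub>C T j (T i x))"
    and dcomm: "\<And>i j. 1 \<le> i \<Longrightarrow> i < j \<Longrightarrow> j \<le> k \<Longrightarrow>
                 T i \<circ> adj (T j) = (\<lambda>x. cnj (q i j) *\<^sub>C adj (T j) (T i x))"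
    and fin: "finite u"
  shows "u \<subseteq> {1..k} \<longrightarrow> (\<forall>x. 0 \<le> Bf T u x x)"
  using fin
proof (induction u rule: finite_remove_induct)
  case empty
  show ?case by (simp add: Bf_def Tpow_empty Re_cinner_self)
next
  case (remove u)
  show ?case
  proof (intro impI allI)
    fix x
    assume uk: "u \<subseteq> {1..k}"
    define n where "n = Min u"
    define u' where "u' = u - {n}"
    have nu: "n \<in> u" using remove.hyps by (simp add: n_def)
    have fu': "finite u'" using remove.hyps by (simp add: u'_def)
    have u_eq: "u = insert n u'" using nu by (auto simp: u'_def)
    have nu': "n \<notin> u'" by (simp add: u'_def)
    have lt: "\<And>j. j \<in> u' \<Longrightarrow> n < j"
      using remove.hyps by (auto simp: u'_def n_def order_le_neq_trans)
    have u'k: "u' \<subseteq> {1..k}" using uk by (auto simp: u'_def)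
    have nk: "1 \<le> n" "n \<le> k" using uk nu by auto
    have IH: "\<And>y. 0 \<le> Bf T u' y y" using remove.IH[OF nu] u'k by (simp add: u'_def)
    define Tn where "Tn = T n"
    have cTn: "contraction Tn" using contr nk by (simp add: Tn_def)
    define P where "P = (\<lambda>y. adj Tn (Tn y))"
    have cv: "contraction (Tpow T v)" if "v \<subseteq> u'" for v
      using that u'k fu' by (intro Tpow_contraction contr) (auto intro: finite_subset)
    have Pcomm: "P (T j y) = T j (P y)" if j: "j \<in> u'" for j y
    proof -
      have jk: "n < j" "j \<le> k" using lt[OF j] u'k j by auto
      have cTj: "contraction (T j)" using contr jk nk by simp
      have c1: "Tn (T j z) = q n j *\<^sub>C T j (Tn z)" for z
        using fun_cong[OF comm[OF nk(1) jk], of z] by (simp add: Tn_def)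
      have c2: "Tn (adj (T j) z) = cnj (q n j) *\<^sub>C adj (T j) (Tn z)" for z
        using fun_cong[OF dcomm[OF nk(1) jk], of z] by (simp add: Tn_def)
      have swap: "T j (adj Tn z) = q n j *\<^sub>C adj Tn (T j z)" for z
      proof (rule cinner_ext)
        fix w
        have "cinner w (T j (adj Tn z)) = cinner (adj (T j) w) (adj Tn z)"
          by (simp add: adj_prop2[OF cTj])
        also have "\<dots> = cinner (Tn (adj (T j) w)) z" by (simp add: adj_prop[OF cTn])
        also have "\<dots> = q n j * cinner (adj (T j) (Tn w)) z" by (simp add: c2 cinner_scaleC_left)
        also have "\<dots> = q n j * cinner (Tn w) (T j z)" by (simp add: adj_prop2[OF cTj])
        also have "\<dots> = cinner w (q n j *\<^sub>C adj Tn (T j z))"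
          by (simp add: adj_prop[OF cTn] cinner_scaleC_right)
        finally show "cinner w (T j (adj Tn z)) = cinner w (q n j *\<^sub>C adj Tn (T j z))" .
      qed
      show ?thesis by (simp add: P_def c1 adj_scaleC[OF cTn] swap)
    qed
    have PT: "P (Tpow T v y) = Tpow T v (P y)" if "v \<subseteq> u'" for v y
      using that fu' by (intro Tpow_commute Pcomm) (auto intro: finite_subset)
    have ReP: "Re (cinner (P p) r) = Re (cinner (Tn p) (Tn r))" for p r
      by (simp add: P_def adj_prop2[OF cTn] Re_cinner_sym[of "Tn p"])
    have ReP2: "Re (cinner p (P r)) = Re (cinner (Tn p) (Tn r))" for p r
      by (simp add: P_def adj_prop[OF cTn])
    have split: "Bf T u x x = Bf T u' x x - Bf T u' (P x) x"
    proof -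
      let ?g = "\<lambda>v. (-1::real)^card v * Re (cinner (Tpow T v x) (Tpow T v x))"
      have inj: "inj_on (insert n) (Pow u')" using nu' by (auto simp: inj_on_def)
      have disj: "Pow u' \<inter> insert n ` Pow u' = {}" using nu' by auto
      have "Bf T u x x = sum ?g (Pow u') + sum ?g (insert n ` Pow u')"
        unfolding Bf_def u_eq Pow_insert using fu' disj by (intro sum.union_disjoint) auto
      also have "sum ?g (insert n ` Pow u') = sum (?g \<circ> insert n) (Pow u')"
        using inj by (rule sum.reindex)
      also have "\<dots> = - Bf T u' (P x) x"
        unfolding Bf_def sum_negf[symmetric]
      proof (rule sum.cong)
        fix v assume v: "v \<in> Pow u'"
        have fv: "finite v" using v fu' by (auto intro: finite_subset)
        have nv: "n \<notin> v" using v nu' by auto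
        have "Tpow T (insert n v) = Tn \<circ> Tpow T v"
          unfolding Tn_def using fv v lt by (intro Tpow_insert_min) auto
        then show "(?g \<circ> insert n) v = - ((-1)^card v * Re (cinner (Tpow T v (P x)) (Tpow T v x)))"
          using fv nv v by (simp add: PT[symmetric] ReP)
      qed simp
      finally show ?thesis by (simp add: Bf_def)
    qed
    have cvu: "\<And>v. v \<in> Pow u' \<Longrightarrow> contraction (Tpow T v)" using cv by auto
    have "Bf T u' (P x) x \<le> Bf T u' x x"
    proof (rule mono_lemma[where B = "Bf T u'" and P = P and x = x and K = "real (card (Pow u')) * (norm x)^2"])
      show "0 \<le> Bf T u' y y" for y by (rule IH)
      show "(Bf T u' y z)^2 \<le> Bf T u' y y * Bf T u' z z" for y z
      proof (rule quad_lemma)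
        fix t
        show "0 \<le> Bf T u' y y - 2 * t * Bf T u' y z + t^2 * Bf T u' z z"
          using IH[of "y - t *\<^sub>R z"] Bf_expand[OF cvu] by simp
      qed
      show "Bf T u' (P p) r = Bf T u' p (P r)" for p r
        unfolding Bf_def
      proof (rule sum.cong)
        fix v assume "v \<in> Pow u'"
        then show "(-1)^card v * Re (cinner (Tpow T v (P p)) (Tpow T v r)) =
                   (-1)^card v * Re (cinner (Tpow T v p) (Tpow T v (P r)))"
          by (simp add: PT[symmetric] ReP ReP2)
      qed simp
      have nP: "norm (P y) \<le> norm y" for y
        using adj_norm[OF cTn, of "Tn y"] cTn by (auto simp: P_def contraction_def intro: order_trans)
      have nPj: "norm ((P^^j) x) \<le> norm x" for j
        by (induction j) (auto intro: order_trans[OF nP])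
      have Bbound: "Bf T u' w w \<le> real (card (Pow u')) * (norm w)^2" for w
      proof -
        have "Bf T u' w w \<le> (\<Sum>v\<in>Pow u'. (norm w)^2)"
          unfolding Bf_def
        proof (rule sum_mono)
          fix v assume v: "v \<in> Pow u'"
          have "(-1::real)^card v * Re (cinner (Tpow T v w) (Tpow T v w)) \<le> (norm (Tpow T v w))^2"
            by (cases "even (card v)") (auto simp: Re_cinner_self)
          also have "\<dots> \<le> (norm w)^2"
            using cvu[OF v] by (intro power_mono) (auto simp: contraction_def)
          finally show "(-1::real)^card v * Re (cinner (Tpow T v w) (Tpow T v w)) \<le> (norm w)^2" .
        qed
        then show ?thesis by simp
      qed
      show "Bf T u' ((P^^j) x) ((P^^j) x) \<le> real (card (Pow u')) * (norm x)^2" for j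
        using Bbound[of "(P^^j) x"] nPj[of j]
        by (meson mult_left_mono of_nat_0_le_iff order_trans power_mono norm_ge_zero)
    qed
    then show "0 \<le> Bf T u x x" using split by simp
  qed
qed

theorem proposition3p3:
  fixes T :: "nat \<Rightarrow> 'a::chilbert_space \<Rightarrow> 'a"
    and q :: "nat \<Rightarrow> nat \<Rightarrow> complex"
    and k :: nat
  assumes contr: "\<And>i. i \<in> {1..k} \<Longrightarrow> contraction (T i)"
    and q_circle: "\<And>i j. 1 \<le> i \<Longrightarrow> i < j \<Longrightarrow> j \<le> k \<Longrightarrow> cmod (q i j) = 1"
    and comm: "\<And>i j. 1 \<le> i \<Longrightarrow> i < j \<Longrightarrow> j \<le> k \<Longrightarrow>
                 T i \<circ> T j = (\<lambda>x. q i j *\<^sub>C T j (T i x))"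
    and dcomm: "\<And>i j. 1 \<le> i \<Longrightarrow> i < j \<Longrightarrow> j \<le> k \<Longrightarrow>
                 T i \<circ> adj (T j) = (\<lambda>x. cnj (q i j) *\<^sub>C adj (T j) (T i x))"
  shows "\<forall>u. u \<subseteq> {1..k} \<longrightarrow> positive_op (Sop T u)"
proof (intro allI impI)
  fix u :: "nat set"
  assume uk: "u \<subseteq> {1..k}"
  have fu: "finite u" using uk by (rule finite_subset) simp
  have pos: "0 \<le> Bf T u x x" for x
    using main_lemma[where T=T and q=q and k=k and u=u, OF contr comm dcomm fu] uk by blast
  have cv: "contraction (Tpow T v)" if "v \<in> Pow u" for v
    using that uk fu by (intro Tpow_contraction contr) (auto intro: finite_subset)
  have eq: "cinner x (Sop T u x) = complex_of_real (Bf T u x x)" for x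
  proof -
    have "cinner x (Sop T u x) = (\<Sum>v\<in>Pow u. complex_of_real ((-1)^card v * Re (cinner (Tpow T v x) (Tpow T v x))))"
      unfolding Sop_def cinner_sum_right
    proof (rule sum.cong)
      fix v assume "v \<in> Pow u"
      then show "cinner x (((-1::real) ^ card v) *\<^sub>R adj (Tpow T v) (Tpow T v x)) =
        complex_of_real ((-1)^card v * Re (cinner (Tpow T v x) (Tpow T v x)))"
        using cv by (simp add: cinner_scaleR_right adj_prop[symmetric] cinner_self Re_cinner_self)
    qed simp
    also have "\<dots> = complex_of_real (Bf T u x x)" by (simp add: Bf_def)
    finally show ?thesis .
  qed
  show "positive_op (Sop T u)"
    unfolding positive_op_def using eq pos by simp
qed

end
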